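(* Let $X=(X_1,\dots,X_d)$ be a random vector with values in $\{0,1\}^d$ such that $\mathbb{P}(X=x)>0$ for every $x\in\{0,1\}^d$, and let $G:\{0,1\}^d\to\mathbb{R}$. For $A\subseteq D:=\{1,\dots,d\}$ let $e_A(X_A):=\dfrac{(-1)^{\sum_{j\in A}X_j}}{\mathbf{P}_A(X_A)}$ (with $e_\emptyset(X_\emptyset)=1$). Let $\boldsymbol{\mu}=(\mu_A)_{A\subseteq D}$ with $\mu_A:=\mathbb{E}[e_A(X_A)G(X)]$, and let $\Gamma=(\Gamma_{A,B})_{A,B\subseteq D}$ with $\Gamma_{A,B}:=\mathbb{E}[e_A(X_A)e_B(X_B)]$. Then there exists a unique vector $\boldsymbol\beta=(\beta_A)_{A\subseteq D}\in\mathbb{R}^{2^d}$ such that $$G(X)=\sum_{A\subseteq D}\beta_A\, e_A(X_A)\quad\text{a.s.},$$ this vector satisfies $\Gamma\boldsymbol\beta=\boldsymbol\mu$, and this expansion is the generalized Hoeffding decomposition of $G(X)$, i.e. its components are $G_A(X_A)=\beta_A e_A(X_A)$ for every $A\subseteq D$.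
   Context: For $A\subseteq D$, $X_A:=(X_i)_{i\in A}$ and $\mathbf{P}_A(x_A):=\mathbb{P}(X_A=x_A)$ denotes its probability mass function; $X_\emptyset:=1$. The generalized Hoeffding decomposition (GHD) of a square-integrable $G(X)$ is the (unique, under the full-support hypothesis) representation $G(X)=\sum_{A\subseteq D}G_A(X_A)$, where each $G_A(X_A)$ is a real function of $X_A$ and the family is hierarchically orthogonal: for all $B\subsetneq B'\subseteq D$, $\mathbb{E}[G_B(X_B)G_{B'}(X_{B'})]=0$. *)

theory Defs
  imports "HOL-Probability.Probability"
begin

text \<open>Index set D = {1..d}; the state space {0,1}^d is represented by extensional
  functions x :: nat \<Rightarrow> bool on {1..d} (True encodes 1, False encodes 0).\<close>

definition index_set :: "nat \<Rightarrow> nat set" where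
  "index_set d = {1..d}"

definition cube :: "nat \<Rightarrow> (nat \<Rightarrow> bool) set" where
  "cube d = index_set d \<rightarrow>\<^sub>E (UNIV :: bool set)"

definition marg :: "(nat \<Rightarrow> bool) pmf \<Rightarrow> nat set \<Rightarrow> (nat \<Rightarrow> bool) \<Rightarrow> real" where
  "marg p A x = measure_pmf.prob p {y. \<forall>j\<in>A. y j = x j}"

definition e_fun :: "(nat \<Rightarrow> bool) pmf \<Rightarrow> nat set \<Rightarrow> (nat \<Rightarrow> bool) \<Rightarrow> real" where
  "e_fun p A x = (-1) ^ (\<Sum>j\<in>A. (if x j then 1 else 0 :: nat)) / marg p A x"

definition mu_vec :: "(nat \<Rightarrow> bool) pmf \<Rightarrow> ((nat \<Rightarrow> bool) \<Rightarrow> real) \<Rightarrow> nat set \<Rightarrow> real" where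
  "mu_vec p G A = measure_pmf.expectation p (\<lambda>x. e_fun p A x * G x)"

definition Gamma_mat :: "(nat \<Rightarrow> bool) pmf \<Rightarrow> nat set \<Rightarrow> nat set \<Rightarrow> real" where
  "Gamma_mat p A B = measure_pmf.expectation p (\<lambda>x. e_fun p A x * e_fun p B x)"

text \<open>Generalized Hoeffding decomposition: Gc A is a function of x_A only, the
  components sum to G(X) a.s., and the family is hierarchically orthogonal.
  (Square integrability is automatic: the state space is finite.)\<close>
definition is_GHD :: "nat set \<Rightarrow> (nat \<Rightarrow> bool) pmf \<Rightarrow> ((nat \<Rightarrow> bool) \<Rightarrow> real)
    \<Rightarrow> (nat set \<Rightarrow> (nat \<Rightarrow> bool) \<Rightarrow> real) \<Rightarrow> bool" where
  "is_GHD D p G Gc \<longleftrightarrow>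
     (\<forall>A\<subseteq>D. \<forall>x y. (\<forall>j\<in>A. x j = y j) \<longrightarrow> Gc A x = Gc A y) \<and>
     (AE x in measure_pmf p. G x = (\<Sum>A\<in>Pow D. Gc A x)) \<and>
     (\<forall>B B'. B \<subset> B' \<and> B' \<subseteq> D \<longrightarrow>
        measure_pmf.expectation p (\<lambda>x. Gc B x * Gc B' x) = 0)"

end

theory Submission
  imports Defs "HOL-Library.Function_Algebras"
begin

definition sc :: "real \<Rightarrow> ((nat\<Rightarrow>bool)\<Rightarrow>real) \<Rightarrow> ((nat\<Rightarrow>bool)\<Rightarrow>real)" where
  "sc c f = (\<lambda>x. c * f x)"

interpretation fv: vector_space sc
  by unfold_locales (auto simp: sc_def fun_eq_iff algebra_simps plus_fun_def)

lemma sum_fun_apply: "(\<Sum>v\<in>S. f v) x = (\<Sum>v\<in>S. f v x)"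
proof (cases "finite S")
  case True
  then show ?thesis by (induction S rule: finite_induct) (auto simp: plus_fun_def zero_fun_def)
qed (simp add: zero_fun_def)

definition sgnf :: "(nat\<Rightarrow>bool) \<Rightarrow> nat set \<Rightarrow> real" where
  "sgnf z A = (-1) ^ (\<Sum>j\<in>A. (if z j then 1 else 0 :: nat))"

lemma e_fun_alt: "e_fun p A x = sgnf x A / marg p A x"
  by (simp add: e_fun_def sgnf_def)

lemma marg_cong: "(\<forall>j\<in>A. x j = y j) \<Longrightarrow> marg p A x = marg p A y"
  unfolding marg_def by (rule arg_cong[where f="measure_pmf.prob p"]) auto

lemma sgnf_cong: "(\<forall>j\<in>A. x j = y j) \<Longrightarrow> sgnf x A = sgnf y A"
  unfolding sgnf_def by (intro arg_cong[where f="\<lambda>n. (-1::real)^n"] sum.cong) auto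

lemma e_fun_cong: "(\<forall>j\<in>A. x j = y j) \<Longrightarrow> e_fun p A x = e_fun p A y"
  using marg_cong sgnf_cong e_fun_alt by metis

lemma sgnf_remove: "finite A \<Longrightarrow> j \<in> A \<Longrightarrow> sgnf z A = (if z j then -1 else 1) * sgnf z (A - {j})"
  unfolding sgnf_def by (simp add: sum.remove power_add)

lemma sgnf_flip: "finite A \<Longrightarrow> j \<in> A \<Longrightarrow> sgnf (z(j := \<not> z j)) A = - sgnf z A"
proof -
  assume a: "finite A" "j \<in> A"
  have "sgnf (z(j := \<not> z j)) (A - {j}) = sgnf z (A - {j})" by (rule sgnf_cong) auto
  then show ?thesis using sgnf_remove[OF a, of z] sgnf_remove[OF a, of "z(j := \<not> z j)"] by auto
qed

lemma sgnf_sq: "sgnf z A * sgnf z A = 1"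
  by (simp add: sgnf_def flip: power_mult_distrib)

lemma sum_invol_zero:
  fixes k :: "'a \<Rightarrow> real"
  assumes "finite S" "\<And>x. x\<in>S \<Longrightarrow> \<sigma> x \<in> S" "\<And>x. x\<in>S \<Longrightarrow> \<sigma> (\<sigma> x) = x"
    "\<And>x. x\<in>S \<Longrightarrow> k (\<sigma> x) = - k x"
  shows "sum k S = 0"
proof -
  have b: "bij_betw \<sigma> S S" by (rule bij_betwI[where g=\<sigma>]) (auto simp: assms)
  have "sum k S = sum (\<lambda>x. k (\<sigma> x)) S" using sum.reindex_bij_betw[OF b, of k] by simp
  also have "\<dots> = - sum k S" by (simp add: assms sum_negf)
  finally show ?thesis by simp
qed

context
  fixes d :: nat and p :: "(nat \<Rightarrow> bool) pmf"
  assumes support: "set_pmf p = cube d"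
begin

lemma finite_C: "finite (cube d)"
  unfolding cube_def index_set_def by (intro finite_PiE) auto

lemma finite_D: "finite (index_set d)"
  unfolding index_set_def by auto

lemma cube_mem: "x \<in> cube d \<longleftrightarrow> (\<forall>i. i \<notin> index_set d \<longrightarrow> x i = undefined)"
  unfolding cube_def by (auto simp: PiE_iff extensional_def)

lemma expect: "measure_pmf.expectation p f = (\<Sum>x\<in>cube d. pmf p x * f x)"
  by (subst integral_measure_pmf[of "cube d"]) (auto simp: support finite_C)

lemma marg_sum: "marg p A z = (\<Sum>x\<in>{x\<in>cube d. \<forall>j\<in>A. x j = z j}. pmf p x)"
proof -
  have "marg p A z = measure_pmf.prob p ({y. \<forall>j\<in>A. y j = z j} \<inter> set_pmf p)"
    unfolding marg_def by (simp add: measure_Int_set_pmf)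
  also have "\<dots> = (\<Sum>x\<in>{x\<in>cube d. \<forall>j\<in>A. x j = z j}. pmf p x)"
    by (subst measure_measure_pmf_finite) (auto simp: support finite_C intro: finite_subset[OF _ finite_C] intro!: sum.cong)
  finally show ?thesis .
qed

lemma marg_pos: "z \<in> cube d \<Longrightarrow> marg p A z > 0"
proof -
  assume z: "z \<in> cube d"
  have "0 < pmf p z" using z support by (simp add: pmf_positive)
  also have "\<dots> \<le> (\<Sum>x\<in>{x\<in>cube d. \<forall>j\<in>A. x j = z j}. pmf p x)"
    by (rule member_le_sum) (auto simp: z intro: finite_subset[OF _ finite_C])
  finally show ?thesis by (simp add: marg_sum)
qed

definition Z :: "nat set \<Rightarrow> (nat \<Rightarrow> bool) set" where
  "Z A = {z\<in>cube d. \<forall>i\<in>index_set d - A. \<not> z i}"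

lemma finite_Z: "finite (Z A)"
  unfolding Z_def using finite_C by auto

lemma delta_other:
  assumes A: "A \<subseteq> index_set d" and B: "B \<subseteq> index_set d" and nAB: "\<not> A \<subseteq> B"
  shows "(\<Sum>z\<in>Z A. sgnf z A * e_fun p B z) = 0"
proof -
  obtain j where j: "j \<in> A" "j \<notin> B" using nAB by auto
  have fA: "finite A" using A finite_D finite_subset by blast
  show ?thesis
  proof (rule sum_invol_zero[where \<sigma>="\<lambda>z. z(j := \<not> z j)"])
    show "finite (Z A)" by (rule finite_Z)
  next
    fix z assume "z \<in> Z A"
    then show "z(j := \<not> z j) \<in> Z A" using j A unfolding Z_def cube_mem by auto
  next
    fix z assume "z \<in> Z A"
    show "(z(j := \<not> z j))(j := \<not> (z(j := \<not> z j)) j) = z" by auto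
  next
    fix z assume "z \<in> Z A"
    have "e_fun p B (z(j := \<not> z j)) = e_fun p B z" by (rule e_fun_cong) (use j in auto)
    then show "sgnf (z(j := \<not> z j)) A * e_fun p B (z(j := \<not> z j)) = - (sgnf z A * e_fun p B z)"
      using sgnf_flip[OF fA j(1)] by simp
  qed
qed

lemma delta_self:
  assumes A: "A \<subseteq> index_set d"
  shows "(\<Sum>z\<in>Z A. sgnf z A * e_fun p A z) > 0"
proof (rule sum_pos)
  show "finite (Z A)" by (rule finite_Z)
  have "(\<lambda>i. if i \<in> index_set d then False else undefined) \<in> Z A"
    unfolding Z_def cube_mem by auto
  then show "Z A \<noteq> {}" by auto
next
  fix z assume z: "z \<in> Z A"
  then have "z \<in> cube d" unfolding Z_def by auto
  then have "marg p A z > 0" by (rule marg_pos)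
  then show "0 < sgnf z A * e_fun p A z"
    by (simp add: e_fun_alt sgnf_sq times_divide_eq_right[symmetric])
qed

lemma uniq:
  assumes h: "\<forall>x\<in>cube d. (\<Sum>B\<in>Pow (index_set d). \<gamma> B * e_fun p B x) = 0"
  shows "\<forall>A\<in>Pow (index_set d). \<gamma> A = 0"
proof (rule ccontr)
  assume "\<not> ?thesis"
  then have ne: "{B\<in>Pow (index_set d). \<gamma> B \<noteq> 0} \<noteq> {}" by auto
  have fin: "finite {B\<in>Pow (index_set d). \<gamma> B \<noteq> 0}" using finite_D by auto
  from finite_has_maximal[OF fin ne] obtain A where
    A: "A \<in> {B\<in>Pow (index_set d). \<gamma> B \<noteq> 0}"
    and mx: "\<forall>b\<in>{B\<in>Pow (index_set d). \<gamma> B \<noteq> 0}. A \<le> b \<longrightarrow> A = b"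
    by (elim bexE)
  have AD: "A \<in> Pow (index_set d)" and gA: "\<gamma> A \<noteq> 0" using A by auto
  have "0 = (\<Sum>z\<in>Z A. sgnf z A * (\<Sum>B\<in>Pow (index_set d). \<gamma> B * e_fun p B z))"
    using h unfolding Z_def by (intro sum.neutral[symmetric]) simp
  also have "\<dots> = (\<Sum>z\<in>Z A. \<Sum>B\<in>Pow (index_set d). \<gamma> B * (sgnf z A * e_fun p B z))"
    by (rule sum.cong[OF refl]) (simp add: sum_distrib_left mult.left_commute)
  also have "\<dots> = (\<Sum>B\<in>Pow (index_set d). \<Sum>z\<in>Z A. \<gamma> B * (sgnf z A * e_fun p B z))"
    by (rule sum.swap)
  also have "\<dots> = (\<Sum>B\<in>Pow (index_set d). \<gamma> B * (\<Sum>z\<in>Z A. sgnf z A * e_fun p B z))"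
    by (simp add: sum_distrib_left)
  also have "\<dots> = \<gamma> A * (\<Sum>z\<in>Z A. sgnf z A * e_fun p A z)
      + (\<Sum>B\<in>Pow (index_set d) - {A}. \<gamma> B * (\<Sum>z\<in>Z A. sgnf z A * e_fun p B z))"
    using AD finite_D by (simp add: sum.remove)
  also have "(\<Sum>B\<in>Pow (index_set d) - {A}. \<gamma> B * (\<Sum>z\<in>Z A. sgnf z A * e_fun p B z)) = 0"
  proof (rule sum.neutral, rule ballI)
    fix B assume B: "B \<in> Pow (index_set d) - {A}"
    show "\<gamma> B * (\<Sum>z\<in>Z A. sgnf z A * e_fun p B z) = 0"
    proof (cases "A \<subseteq> B")
      case True
      then have "\<gamma> B = 0" using mx B by auto
      then show ?thesis by simp
    next
      case False
      then have "(\<Sum>z\<in>Z A. sgnf z A * e_fun p B z) = 0"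
        using delta_other[of A B] AD B by auto
      then show ?thesis by simp
    qed
  qed
  finally have "\<gamma> A * (\<Sum>z\<in>Z A. sgnf z A * e_fun p A z) = 0" by simp
  moreover have "(\<Sum>z\<in>Z A. sgnf z A * e_fun p A z) > 0" using delta_self AD by auto
  ultimately show False using gA by simp
qed

lemma ortho:
  assumes BB: "B \<subset> B'" and B'D: "B' \<subseteq> index_set d"
    and g: "\<And>x y. (\<forall>j\<in>B. x j = y j) \<Longrightarrow> g x = g y"
  shows "(\<Sum>x\<in>cube d. pmf p x * (e_fun p B' x * g x)) = 0"
proof -
  define r where "r x = (\<lambda>i. if i \<in> index_set d then (i \<in> B' \<and> x i) else undefined)" for x :: "nat \<Rightarrow> bool"
  define R where "R = r ` cube d"
  define k where "k z = sgnf z B' * g z" for z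
  define m where "m z = marg p B' z" for z
  have finR: "finite R" unfolding R_def using finite_C by simp
  have rC: "r x \<in> cube d" for x unfolding r_def cube_mem by auto
  have agree: "\<forall>j\<in>B'. r x j = x j" for x using B'D unfolding r_def by auto
  have agreeB: "\<forall>j\<in>B. r x j = x j" for x using agree BB by auto
  have mpos: "z \<in> R \<Longrightarrow> m z > 0" for z unfolding R_def m_def using rC marg_pos by auto
  have step1: "pmf p x * (e_fun p B' x * g x) = pmf p x * (k (r x) / m (r x))" for x
  proof -
    have "e_fun p B' x = e_fun p B' (r x)" using agree by (metis e_fun_cong)
    moreover have "g x = g (r x)" using agreeB g by metis
    ultimately show ?thesis by (simp add: e_fun_alt k_def m_def)
  qed
  have "(\<Sum>x\<in>cube d. pmf p x * (e_fun p B' x * g x)) = (\<Sum>x\<in>cube d. pmf p x * (k (r x) / m (r x)))"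
    using step1 by simp
  also have "\<dots> = (\<Sum>z\<in>R. \<Sum>x\<in>{x. x \<in> cube d \<and> r x = z}. pmf p x * (k (r x) / m (r x)))"
    by (rule sum.group[symmetric]) (auto simp: finite_C finR R_def)
  also have "\<dots> = (\<Sum>z\<in>R. k z)"
  proof (rule sum.cong[OF refl])
    fix z assume z: "z \<in> R"
    then obtain y where y: "y \<in> cube d" "z = r y" unfolding R_def by auto
    have set_eq: "{x. x \<in> cube d \<and> r x = z} = {x\<in>cube d. \<forall>j\<in>B'. x j = z j}"
    proof -
      have "r x = r y \<longleftrightarrow> (\<forall>j\<in>B'. x j = y j)" for x
        using B'D unfolding r_def fun_eq_iff by auto
      then show ?thesis using y agree by auto
    qed
    have "(\<Sum>x\<in>{x. x \<in> cube d \<and> r x = z}. pmf p x * (k (r x) / m (r x)))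
        = (\<Sum>x\<in>{x. x \<in> cube d \<and> r x = z}. pmf p x) * (k z / m z)"
      by (subst sum_distrib_right) (rule sum.cong, auto)
    also have "(\<Sum>x\<in>{x. x \<in> cube d \<and> r x = z}. pmf p x) = m z"
      unfolding set_eq m_def by (simp add: marg_sum)
    finally show "(\<Sum>x\<in>{x. x \<in> cube d \<and> r x = z}. pmf p x * (k (r x) / m (r x))) = k z"
      using mpos[OF z] by simp
  qed
  also have "\<dots> = 0"
  proof -
    obtain j where j: "j \<in> B'" "j \<notin> B" using BB by auto
    have fB': "finite B'" using B'D finite_D finite_subset by blast
    have jD: "j \<in> index_set d" using j B'D by auto
    show ?thesis
    proof (rule sum_invol_zero[where \<sigma>="\<lambda>z. z(j := \<not> z j)"])
      show "finite R" by (rule finR)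
    next
      fix z assume "z \<in> R"
      then obtain y where y: "y \<in> cube d" "z = r y" unfolding R_def by auto
      have "z(j := \<not> z j) = r (y(j := \<not> y j))" using y jD j unfolding r_def fun_eq_iff by auto
      moreover have "y(j := \<not> y j) \<in> cube d" using y jD unfolding cube_mem by auto
      ultimately show "z(j := \<not> z j) \<in> R" unfolding R_def by auto
    next
      fix z assume "z \<in> R"
      show "(z(j := \<not> z j))(j := \<not> (z(j := \<not> z j)) j) = z" by auto
    next
      fix z assume "z \<in> R"
      have "g (z(j := \<not> z j)) = g z" by (rule g) (use j in auto)
      then show "k (z(j := \<not> z j)) = - k z"
        using sgnf_flip[OF fB' j(1)] by (simp add: k_def)
    qed
  qed
  finally show ?thesis .
qed

lemma restrict_in_cube: "restrict x (index_set d) \<in> cube d"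
  unfolding cube_mem by simp

lemma restrict_cube: "x \<in> cube d \<Longrightarrow> restrict x (index_set d) = x"
  unfolding cube_mem by (auto simp: fun_eq_iff)

lemma exist:
  "\<exists>\<beta>\<in>Pow (index_set d) \<rightarrow>\<^sub>E (UNIV :: real set).
     \<forall>x\<in>cube d. G x = (\<Sum>A\<in>Pow (index_set d). \<beta> A * e_fun p A x)"
proof -
  define D where "D = index_set d"
  define E where "E = (\<lambda>A. e_fun p A) ` Pow D"
  have finE: "finite E" unfolding E_def D_def using finite_D by simp
  have inj: "inj_on (\<lambda>A. e_fun p A) (Pow D)"
  proof (rule inj_onI)
    fix A B assume A: "A \<in> Pow D" and B: "B \<in> Pow D" and eq: "e_fun p A = e_fun p B"
    show "A = B"
    proof (rule ccontr)
      assume ne: "A \<noteq> B"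
      define \<gamma> where "\<gamma> C = (if C = A then 1 else if C = B then -1 else 0::real)" for C
      have "\<forall>x\<in>cube d. (\<Sum>C\<in>Pow (index_set d). \<gamma> C * e_fun p C x) = 0"
      proof
        fix x
        have "(\<Sum>C\<in>Pow D. \<gamma> C * e_fun p C x)
            = (\<Sum>C\<in>Pow D. (if C = A then e_fun p A x else 0) - (if C = B then e_fun p B x else 0))"
          by (rule sum.cong[OF refl]) (use ne eq in \<open>auto simp: \<gamma>_def\<close>)
        also have "\<dots> = 0" using A B eq finite_D unfolding D_def
          by (simp add: sum_subtractf)
        finally show "(\<Sum>C\<in>Pow (index_set d). \<gamma> C * e_fun p C x) = 0" unfolding D_def .
      qed
      then have "\<gamma> A = 0" using uniq A unfolding D_def by blast
      then show False by (simp add: \<gamma>_def)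
    qed
  qed
  have indep: "fv.independent E"
  proof (rule fv.independent_if_scalars_zero[OF finE])
    fix f v assume s0: "(\<Sum>v\<in>E. sc (f v) v) = 0" and v: "v \<in> E"
    have "(\<Sum>v\<in>E. sc (f v) v) = (\<Sum>C\<in>Pow D. sc (f (e_fun p C)) (e_fun p C))"
      unfolding E_def by (rule sum.reindex[OF inj, unfolded comp_def])
    then have "\<forall>x\<in>cube d. (\<Sum>C\<in>Pow (index_set d). f (e_fun p C) * e_fun p C x) = 0"
      using s0 unfolding D_def by (auto simp: fun_eq_iff sum_fun_apply sc_def)
    then have "\<forall>C\<in>Pow (index_set d). f (e_fun p C) = 0" by (rule uniq)
    then show "f v = 0" using v unfolding E_def D_def by auto
  qed
  define chi where "chi y = (\<lambda>x::nat\<Rightarrow>bool. if restrict x D = y then 1 else 0 :: real)" for y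
  define X where "X = chi ` cube d"
  have finX: "finite X" unfolding X_def using finite_C by simp
  have inspan: "f \<in> fv.span X" if f: "\<And>x. f x = f (restrict x D)" for f
  proof -
    have "f = (\<Sum>y\<in>cube d. sc (f y) (chi y))"
    proof
      fix x
      have "(\<Sum>y\<in>cube d. sc (f y) (chi y)) x = (\<Sum>y\<in>cube d. if restrict x D = y then f y else 0)"
        unfolding sum_fun_apply sc_def chi_def by (rule sum.cong) auto
      also have "\<dots> = f (restrict x D)" using finite_C restrict_in_cube unfolding D_def by simp
      finally show "f x = (\<Sum>y\<in>cube d. sc (f y) (chi y)) x" using f by simp
    qed
    also have "\<dots> \<in> fv.span X"
      by (intro fv.span_sum fv.span_scale fv.span_base) (auto simp: X_def)
    finally show ?thesis .
  qed
  have EX: "E \<subseteq> fv.span X"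
  proof
    fix v assume "v \<in> E"
    then obtain A where A: "A \<subseteq> D" "v = e_fun p A" unfolding E_def by auto
    show "v \<in> fv.span X" unfolding A(2)
      by (rule inspan, rule e_fun_cong) (use A(1) in auto)
  qed
  define G' where "G' x = G (restrict x D)" for x
  have G'X: "G' \<in> fv.span X" by (rule inspan) (simp add: G'_def)
  have G'E: "G' \<in> fv.span E"
  proof (rule ccontr)
    assume nG: "G' \<notin> fv.span E"
    have ind2: "fv.independent (insert G' E)" by (rule fv.independent_insertI[OF nG indep])
    have "card (insert G' E) \<le> card X"
      using fv.independent_span_bound[OF finX ind2] EX G'X by auto
    also have "\<dots> \<le> card (cube d)" unfolding X_def by (rule card_image_le[OF finite_C])
    also have "\<dots> = 2 ^ card D" unfolding cube_def D_def using finite_D by (simp add: card_PiE)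
    finally have c1: "card (insert G' E) \<le> 2 ^ card D" .
    have "G' \<notin> E" using nG fv.span_base by blast
    then have "card (insert G' E) = Suc (card E)" using finE by simp
    also have "card E = 2 ^ card D" unfolding E_def
      using card_image[OF inj] card_Pow finite_D unfolding D_def by simp
    finally show False using c1 by simp
  qed
  then obtain u where u: "G' = (\<Sum>v\<in>E. sc (u v) v)" using fv.span_finite[OF finE] by auto
  define \<beta> where "\<beta> = restrict (\<lambda>A. u (e_fun p A)) (Pow D)"
  have "\<beta> \<in> Pow (index_set d) \<rightarrow>\<^sub>E (UNIV :: real set)" unfolding \<beta>_def D_def by simp
  moreover have "\<forall>x\<in>cube d. G x = (\<Sum>A\<in>Pow (index_set d). \<beta> A * e_fun p A x)"
  proof
    fix x assume x: "x \<in> cube d"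
    have "G x = G' x" using restrict_cube[OF x] unfolding G'_def D_def by simp
    also have "\<dots> = (\<Sum>C\<in>Pow D. sc (u (e_fun p C)) (e_fun p C)) x"
      unfolding u E_def by (subst sum.reindex[OF inj]) simp
    also have "\<dots> = (\<Sum>A\<in>Pow (index_set d). \<beta> A * e_fun p A x)"
      unfolding sum_fun_apply sc_def \<beta>_def D_def by simp
    finally show "G x = (\<Sum>A\<in>Pow (index_set d). \<beta> A * e_fun p A x)" .
  qed
  ultimately show ?thesis by blast
qed

end

theorem theorem2:
  fixes d :: nat and p :: "(nat \<Rightarrow> bool) pmf" and G :: "(nat \<Rightarrow> bool) \<Rightarrow> real"
  assumes support: "set_pmf p = cube d"
  shows "(\<exists>!\<beta>. \<beta> \<in> Pow (index_set d) \<rightarrow>\<^sub>E (UNIV :: real set) \<and>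
            (AE x in measure_pmf p. G x = (\<Sum>A\<in>Pow (index_set d). \<beta> A * e_fun p A x)))
       \<and> (\<forall>\<beta>. \<beta> \<in> Pow (index_set d) \<rightarrow>\<^sub>E (UNIV :: real set) \<and>
            (AE x in measure_pmf p. G x = (\<Sum>A\<in>Pow (index_set d). \<beta> A * e_fun p A x))
            \<longrightarrow> (\<forall>A\<in>Pow (index_set d).
                   (\<Sum>B\<in>Pow (index_set d). Gamma_mat p A B * \<beta> B) = mu_vec p G A)
              \<and> is_GHD (index_set d) p G (\<lambda>A x. \<beta> A * e_fun p A x))"
proof -
  have AEiff: "\<And>Q. (AE x in measure_pmf p. Q x) \<longleftrightarrow> (\<forall>x\<in>cube d. Q x)"
    by (simp add: AE_measure_pmf_iff support)
  note ex = exist[OF support, of G]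
  have part1: "\<exists>!\<beta>. \<beta> \<in> Pow (index_set d) \<rightarrow>\<^sub>E (UNIV :: real set) \<and>
            (AE x in measure_pmf p. G x = (\<Sum>A\<in>Pow (index_set d). \<beta> A * e_fun p A x))"
  proof -
    from ex obtain \<beta> where b1: "\<beta> \<in> Pow (index_set d) \<rightarrow>\<^sub>E (UNIV :: real set)"
      and b2: "\<forall>x\<in>cube d. G x = (\<Sum>A\<in>Pow (index_set d). \<beta> A * e_fun p A x)" by blast
    show ?thesis
    proof (rule ex1I[of _ \<beta>])
      show "\<beta> \<in> Pow (index_set d) \<rightarrow>\<^sub>E (UNIV :: real set) \<and>
            (AE x in measure_pmf p. G x = (\<Sum>A\<in>Pow (index_set d). \<beta> A * e_fun p A x))"
        using b1 b2 by (simp add: AE_measure_pmf_iff support)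
    next
      fix \<beta>' assume h: "\<beta>' \<in> Pow (index_set d) \<rightarrow>\<^sub>E (UNIV :: real set) \<and>
            (AE x in measure_pmf p. G x = (\<Sum>A\<in>Pow (index_set d). \<beta>' A * e_fun p A x))"
      then have h1: "\<beta>' \<in> Pow (index_set d) \<rightarrow>\<^sub>E (UNIV :: real set)"
        and h2: "\<forall>x\<in>cube d. G x = (\<Sum>A\<in>Pow (index_set d). \<beta>' A * e_fun p A x)"
        by (simp_all add: AE_measure_pmf_iff support)
      have "\<forall>x\<in>cube d. (\<Sum>A\<in>Pow (index_set d). (\<beta>' A - \<beta> A) * e_fun p A x) = 0"
        using h2 b2 by (simp add: left_diff_distrib sum_subtractf)
      then have "\<forall>A\<in>Pow (index_set d). \<beta>' A - \<beta> A = 0" by (rule uniq[OF support])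
      then show "\<beta>' = \<beta>" by (intro PiE_ext[OF h1 b1]) simp
    qed
  qed
  have part2: "\<forall>\<beta>. \<beta> \<in> Pow (index_set d) \<rightarrow>\<^sub>E (UNIV :: real set) \<and>
            (AE x in measure_pmf p. G x = (\<Sum>A\<in>Pow (index_set d). \<beta> A * e_fun p A x))
            \<longrightarrow> (\<forall>A\<in>Pow (index_set d).
                   (\<Sum>B\<in>Pow (index_set d). Gamma_mat p A B * \<beta> B) = mu_vec p G A)
              \<and> is_GHD (index_set d) p G (\<lambda>A x. \<beta> A * e_fun p A x)"
  proof (intro allI impI)
    fix \<beta> assume h: "\<beta> \<in> Pow (index_set d) \<rightarrow>\<^sub>E (UNIV :: real set) \<and>
            (AE x in measure_pmf p. G x = (\<Sum>A\<in>Pow (index_set d). \<beta> A * e_fun p A x))"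
    then have hAE: "AE x in measure_pmf p. G x = (\<Sum>A\<in>Pow (index_set d). \<beta> A * e_fun p A x)" by blast
    then have hx: "\<forall>x\<in>cube d. G x = (\<Sum>A\<in>Pow (index_set d). \<beta> A * e_fun p A x)"
      by (simp add: AE_measure_pmf_iff support)
    have eqs: "\<forall>A\<in>Pow (index_set d).
                   (\<Sum>B\<in>Pow (index_set d). Gamma_mat p A B * \<beta> B) = mu_vec p G A"
    proof
      fix A assume A: "A \<in> Pow (index_set d)"
      have "mu_vec p G A = (\<Sum>x\<in>cube d. pmf p x * (e_fun p A x * G x))"
        unfolding mu_vec_def by (rule expect[OF support])
      also have "\<dots> = (\<Sum>x\<in>cube d. \<Sum>B\<in>Pow (index_set d). pmf p x * (e_fun p A x * e_fun p B x) * \<beta> B)"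
        by (rule sum.cong[OF refl]) (use hx in \<open>simp add: sum_distrib_left mult_ac\<close>)
      also have "\<dots> = (\<Sum>B\<in>Pow (index_set d). \<Sum>x\<in>cube d. pmf p x * (e_fun p A x * e_fun p B x) * \<beta> B)"
        by (rule sum.swap)
      also have "\<dots> = (\<Sum>B\<in>Pow (index_set d). Gamma_mat p A B * \<beta> B)"
        unfolding Gamma_mat_def expect[OF support] by (simp add: sum_distrib_right)
      finally show "(\<Sum>B\<in>Pow (index_set d). Gamma_mat p A B * \<beta> B) = mu_vec p G A" by simp
    qed
    have ghd: "is_GHD (index_set d) p G (\<lambda>A x. \<beta> A * e_fun p A x)"
      unfolding is_GHD_def
    proof (intro conjI allI impI)
      fix A and x y :: "nat \<Rightarrow> bool" assume "A \<subseteq> index_set d" "\<forall>j\<in>A. x j = y j"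
      then show "\<beta> A * e_fun p A x = \<beta> A * e_fun p A y" using e_fun_cong by (metis (no_types))
    next
      show "AE x in measure_pmf p. G x = (\<Sum>A\<in>Pow (index_set d). \<beta> A * e_fun p A x)" by (rule hAE)
    next
      fix B B' assume BB: "B \<subset> B' \<and> B' \<subseteq> index_set d"
      have "measure_pmf.expectation p (\<lambda>x. \<beta> B * e_fun p B x * (\<beta> B' * e_fun p B' x))
          = \<beta> B * \<beta> B' * (\<Sum>x\<in>cube d. pmf p x * (e_fun p B' x * e_fun p B x))"
        unfolding expect[OF support] by (simp add: sum_distrib_left mult_ac)
      also have "(\<Sum>x\<in>cube d. pmf p x * (e_fun p B' x * e_fun p B x)) = 0"
        using BB by (intro ortho[OF support, of B B' "e_fun p B"]) (auto intro: e_fun_cong)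
      finally show "measure_pmf.expectation p (\<lambda>x. \<beta> B * e_fun p B x * (\<beta> B' * e_fun p B' x)) = 0"
        by simp
    qed
    show "(\<forall>A\<in>Pow (index_set d).
                   (\<Sum>B\<in>Pow (index_set d). Gamma_mat p A B * \<beta> B) = mu_vec p G A)
              \<and> is_GHD (index_set d) p G (\<lambda>A x. \<beta> A * e_fun p A x)" using eqs ghd by blast
  qed
  show ?thesis using part1 part2 by blast
qed

end
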